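(* For each GES $\gamma=(E,\#,\to,\lhd)$ there is an RCES $\rho$ (over the same event set $E$) such that $\gamma$ and $\rho$ are transition equivalent.
   Context: GES: $\gamma=(E,\#,\to,\lhd)$ with $\#\subseteq E^2$ irreflexive symmetric, $\to\subseteq E^2$ a binary relation (initial causality), $\lhd\subseteq E^3$ where $(c,m,t)\in\lhd$ means "$m$ adds $c$ as a cause of $t$", requiring $\neg(c\to t)$. $\mathrm{ic}(e)=\{e'\mid e'\to e\}$, $\mathrm{ac}(H,e)=\{e'\mid\exists a\in H.(e',a,e)\in\lhd\}$. For $X,Y\subseteq E$, $X\to_g Y$ iff $X\subseteq Y$, $\neg(e\#e')$ for all $e,e'\in Y$, $\mathrm{ic}(e)\cup\mathrm{ac}(X,e)\subseteq X$ for all $e\in Y\setminus X$, and for all $t,m\in Y\setminus X$ and $c\in E$, $(c,m,t)\in\lhd$ implies $c\in X$. RCES: a pair $\rho=(E,\vdash)$ with $\vdash\subseteq 2^E\times 2^E$; for $X,Y\subseteq E$, $X\to_{rc}Y$ iff $X\subseteq Y$ and for every $Z\subseteq Y$ there is $W\subseteq X$ with $W\vdash Z$. For an event structure $\mu$ with transition relation $\to_\mu$ on subsets of its events, $\mathcal{C}(\mu)$ is the set of sets reachable from $\emptyset$ by finitely many $\to_\mu$-steps. Two such structures $\mu,\mu'$ are transition equivalent iff $\mathcal{C}(\mu)=\mathcal{C}(\mu')$ and for all $X,Y\in\mathcal{C}(\mu)$: $X\to_\mu Y$ iff $X\to_{\mu'}Y$. *)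

theory Defs
  imports Main
begin

text \<open>A GES over event set E: conflict relation C, initial causality R,
  adding relation A, where (c,m,t) in A means m adds c as a cause of t.\<close>

definition is_GES :: "'a set \<Rightarrow> ('a \<times> 'a) set \<Rightarrow> ('a \<times> 'a) set \<Rightarrow> ('a \<times> 'a \<times> 'a) set \<Rightarrow> bool" where
  "is_GES E C R A \<longleftrightarrow>
     C \<subseteq> E \<times> E \<and> irrefl C \<and> sym C \<and>
     R \<subseteq> E \<times> E \<and> A \<subseteq> E \<times> E \<times> E \<and>
     (\<forall>c m t. (c, m, t) \<in> A \<longrightarrow> (c, t) \<notin> R)"

definition ic :: "('a \<times> 'a) set \<Rightarrow> 'a \<Rightarrow> 'a set" where
  "ic R e = {e'. (e', e) \<in> R}"

definition ac :: "('a \<times> 'a \<times> 'a) set \<Rightarrow> 'a set \<Rightarrow> 'a \<Rightarrow> 'a set" where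
  "ac A H e = {e'. \<exists>a\<in>H. (e', a, e) \<in> A}"

definition ges_trans :: "'a set \<Rightarrow> ('a \<times> 'a) set \<Rightarrow> ('a \<times> 'a) set \<Rightarrow> ('a \<times> 'a \<times> 'a) set
    \<Rightarrow> 'a set \<Rightarrow> 'a set \<Rightarrow> bool" where
  "ges_trans E C R A X Y \<longleftrightarrow>
     X \<subseteq> E \<and> Y \<subseteq> E \<and> X \<subseteq> Y \<and>
     (\<forall>e\<in>Y. \<forall>e'\<in>Y. (e, e') \<notin> C) \<and>
     (\<forall>e\<in>Y - X. ic R e \<union> ac A X e \<subseteq> X) \<and>
     (\<forall>t\<in>Y - X. \<forall>m\<in>Y - X. \<forall>c. (c, m, t) \<in> A \<longrightarrow> c \<in> X)"

definition is_RCES :: "'a set \<Rightarrow> ('a set \<times> 'a set) set \<Rightarrow> bool" where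
  "is_RCES E V \<longleftrightarrow> V \<subseteq> Pow E \<times> Pow E"

definition rc_trans :: "'a set \<Rightarrow> ('a set \<times> 'a set) set \<Rightarrow> 'a set \<Rightarrow> 'a set \<Rightarrow> bool" where
  "rc_trans E V X Y \<longleftrightarrow>
     X \<subseteq> E \<and> Y \<subseteq> E \<and> X \<subseteq> Y \<and>
     (\<forall>Z. Z \<subseteq> Y \<longrightarrow> (\<exists>W. W \<subseteq> X \<and> (W, Z) \<in> V))"

definition configs :: "('a set \<Rightarrow> 'a set \<Rightarrow> bool) \<Rightarrow> 'a set set" where
  "configs T = {Y. T\<^sup>*\<^sup>* {} Y}"

definition trans_equiv :: "('a set \<Rightarrow> 'a set \<Rightarrow> bool) \<Rightarrow> ('a set \<Rightarrow> 'a set \<Rightarrow> bool) \<Rightarrow> bool" where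
  "trans_equiv T T' \<longleftrightarrow> configs T = configs T' \<and>
     (\<forall>X\<in>configs T. \<forall>Y\<in>configs T. T X Y \<longleftrightarrow> T' X Y)"

end

theory Submission
  imports Defs
begin

theorem lemma14:
  fixes E :: "'a set" and C R :: "('a \<times> 'a) set" and A :: "('a \<times> 'a \<times> 'a) set"
  assumes "is_GES E C R A"
  shows "\<exists>V. is_RCES E V \<and> trans_equiv (ges_trans E C R A) (rc_trans E V)"
proof -
  define V where "V = {(W,Z). W \<subseteq> E \<and> Z \<subseteq> E \<and> (\<forall>e\<in>Z. \<forall>e'\<in>Z. (e, e') \<notin> C) \<and>
     (\<forall>e\<in>Z - W. ic R e \<subseteq> W \<and> ac A Z e \<subseteq> W)}"
  have eq: "rc_trans E V X Y = ges_trans E C R A X Y" for X Y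
  proof
    assume r: "rc_trans E V X Y"
    then obtain W where W: "W \<subseteq> X" "(W, Y) \<in> V" unfolding rc_trans_def by blast
    show "ges_trans E C R A X Y"
      unfolding ges_trans_def
    proof (intro conjI ballI allI impI)
      show "X \<subseteq> E" "Y \<subseteq> E" "X \<subseteq> Y" using r unfolding rc_trans_def by auto
      show "\<And>e e'. e \<in> Y \<Longrightarrow> e' \<in> Y \<Longrightarrow> (e, e') \<notin> C" using W unfolding V_def by auto
      fix e assume e: "e \<in> Y - X"
      then have "e \<in> Y - W" using W by auto
      then have h: "ic R e \<subseteq> W" "ac A Y e \<subseteq> W" using W unfolding V_def by auto
      have "ac A X e \<subseteq> ac A Y e" using \<open>X \<subseteq> Y\<close> unfolding ac_def by auto
      then show "ic R e \<union> ac A X e \<subseteq> X" using h W by auto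
    next
      fix t m c assume t: "t \<in> Y - X" and m: "m \<in> Y - X" and a: "(c, m, t) \<in> A"
      have "t \<in> Y - W" using t W by auto
      then have "ac A Y t \<subseteq> W" using W unfolding V_def by auto
      moreover have "c \<in> ac A Y t" using m a unfolding ac_def by auto
      ultimately show "c \<in> X" using W by auto
    qed
  next
    assume g: "ges_trans E C R A X Y"
    show "rc_trans E V X Y"
      unfolding rc_trans_def
    proof (intro conjI allI impI)
      show "X \<subseteq> E" "Y \<subseteq> E" "X \<subseteq> Y" using g unfolding ges_trans_def by auto
      fix Z assume Z: "Z \<subseteq> Y"
      have "(X, Z) \<in> V" unfolding V_def
      proof (clarsimp, intro conjI)
        show "X \<subseteq> E" "Z \<subseteq> E" using g Z unfolding ges_trans_def by auto
        show "\<forall>e\<in>Z. \<forall>e'\<in>Z. (e, e') \<notin> C" using g Z unfolding ges_trans_def by blast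
        show "\<forall>e\<in>Z - X. ic R e \<subseteq> X \<and> ac A Z e \<subseteq> X"
        proof (intro ballI conjI)
          fix e assume e: "e \<in> Z - X"
          then have eY: "e \<in> Y - X" using Z by auto
          then show "ic R e \<subseteq> X" using g unfolding ges_trans_def by blast
          show "ac A Z e \<subseteq> X"
          proof
            fix c assume "c \<in> ac A Z e"
            then obtain m where m: "m \<in> Z" "(c, m, e) \<in> A" unfolding ac_def by auto
            show "c \<in> X"
            proof (cases "m \<in> X")
              case True
              then have "c \<in> ac A X e" using m unfolding ac_def by auto
              then show ?thesis using g eY unfolding ges_trans_def by blast
            next
              case False
              then have "m \<in> Y - X" using m Z by auto
              then show ?thesis using g eY m unfolding ges_trans_def by blast
            qed
          qed
        qed
      qed
      then show "\<exists>W. W \<subseteq> X \<and> (W, Z) \<in> V" by blast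
    qed
  qed
  have "rc_trans E V = ges_trans E C R A" using eq by (intro ext) auto
  moreover have "is_RCES E V" unfolding is_RCES_def V_def by auto
  ultimately show ?thesis unfolding trans_equiv_def by auto
qed

end
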